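(* Let $\phi$ be a function mapping every non-empty subset of $\mathbb{R}^2$ to a non-empty subset of $\mathbb{R}^2$ that satisfies Properties 1 and 2 below. Let $T=\{T_1,\dots,T_m\}$ be a set of pairwise non-crossing geometric trees in the plane. Then the $\phi$-cover of $T$ is well-defined: any two executions of the merging process described below on $T$ output the same set $\mathcal{C}$, regardless of the arbitrary choices made.
   Context: A geometric tree is a plane straight-line embedding of a tree in $\mathbb{R}^2$ (viewed as a subset of $\mathbb{R}^2$). Property 1: for every non-empty $A\subseteq\mathbb{R}^2$, $A\subseteq\phi(A)$. Property 2: for all non-empty $A,B\subseteq\mathbb{R}^2$, if $A\subseteq\phi(B)$ then $\phi(A)\subseteq\phi(B)$. The merging process: start with $\mathcal{C}=\{\phi(T_i)\mid 1\le i\le m\}$ (a collection of sets, each tracked as a separate element); while the elements of $\mathcal{C}$ are not pairwise disjoint, choose arbitrarily two distinct elements $C,C'$ of $\mathcal{C}$ with $C\cap C'\neq\emptyset$ and replace them in $\mathcal{C}$ by $\phi(C\cup C')$; when the elements are pairwise disjoint, output $\mathcal{C}$. The output is called the $\phi$-cover of $T$. *)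

theory Defs
  imports "HOL-Analysis.Analysis" "HOL-Library.Multiset"
begin

type_synonym point = "real ^ 2"

text \<open>The underlying abstract graph is a tree
  (connected, with |E| = |V| - 1); edges are drawn as straight segments that meet only in
  common endpoints and do not pass through other vertices.\<close>
definition plane_tree :: "point set \<Rightarrow> point set set \<Rightarrow> bool" where
  "plane_tree V E \<longleftrightarrow>
     finite V \<and> V \<noteq> {} \<and>
     (\<forall>e\<in>E. \<exists>u v. u \<in> V \<and> v \<in> V \<and> u \<noteq> v \<and> e = {u, v}) \<and>
     (\<forall>u\<in>V. \<forall>v\<in>V. (u, v) \<in> {(x, y). {x, y} \<in> E}\<^sup>*) \<and>
     card E = card V - 1 \<and>
     (\<forall>e\<in>E. \<forall>f\<in>E. e \<noteq> f \<longrightarrow> convex hull e \<inter> convex hull f \<subseteq> e \<inter> f) \<and>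
     (\<forall>w\<in>V. \<forall>e\<in>E. w \<in> convex hull e \<longrightarrow> w \<in> e)"

definition geom_tree :: "point set \<Rightarrow> point set set \<Rightarrow> point set" where
  "geom_tree V E = V \<union> \<Union> ((\<lambda>e. convex hull e) ` E)"

definition non_crossing :: "point set \<times> point set set \<Rightarrow> point set \<times> point set set \<Rightarrow> bool" where
  "non_crossing T1 T2 \<longleftrightarrow>
     (\<forall>e\<in>snd T1. \<forall>f\<in>snd T2.
        \<not> (\<exists>p. convex hull e \<inter> convex hull f = {p} \<and> p \<notin> e \<and> p \<notin> f))"

text \<open>One step of the merging process on a collection (multiset) of sets: pick two
  distinct elements (occurrences) C, C' with nonempty intersection and replace them by
  phi (C \<union> C').\<close>
definition merge_step :: "('a set \<Rightarrow> 'a set) \<Rightarrow> 'a set multiset \<Rightarrow> 'a set multiset \<Rightarrow> bool" where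
  "merge_step \<phi> \<C> \<C>' \<longleftrightarrow>
     (\<exists>C C'. {#C, C'#} \<subseteq># \<C> \<and> C \<inter> C' \<noteq> {} \<and>
             \<C>' = \<C> - {#C, C'#} + {#\<phi> (C \<union> C')#})"

definition pairwise_disjoint_coll :: "'a set multiset \<Rightarrow> bool" where
  "pairwise_disjoint_coll \<C> \<longleftrightarrow> (\<forall>C C'. {#C, C'#} \<subseteq># \<C> \<longrightarrow> C \<inter> C' = {})"

definition merging_output :: "('a set \<Rightarrow> 'a set) \<Rightarrow> 'a set multiset \<Rightarrow> 'a set multiset \<Rightarrow> bool" where
  "merging_output \<phi> \<C>0 \<C> \<longleftrightarrow> (merge_step \<phi>)\<^sup>*\<^sup>* \<C>0 \<C> \<and> pairwise_disjoint_coll \<C>"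

end

theory Submission
  imports Defs
begin

lemma two_sub: "a \<noteq> b \<Longrightarrow> a \<in># M \<Longrightarrow> b \<in># M \<Longrightarrow> {#a, b#} \<subseteq># M"
proof -
  assume ab: "a \<noteq> b" "a \<in># M" "b \<in># M"
  from multi_member_split[OF ab(2)] obtain M' where M: "M = add_mset a M'" ..
  have "b \<in># M'" using M ab by simp
  then show ?thesis using M by simp
qed

lemma sub_mem1: "{#C, C'#} \<subseteq># A \<Longrightarrow> C \<in># A"
proof -
  assume h: "{#C, C'#} \<subseteq># A"
  show ?thesis by (rule mset_subset_eqD[OF h]) simp
qed

lemma sub_mem2: "{#C, C'#} \<subseteq># A \<Longrightarrow> C' \<in># A"
proof -
  assume h: "{#C, C'#} \<subseteq># A"
  show ?thesis by (rule mset_subset_eqD[OF h]) simp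
qed

lemma sub_rest: "X \<in># A \<Longrightarrow> X \<notin># A - {#C, C'#} \<Longrightarrow> X = C \<or> X = C'"
proof -
  assume h: "X \<in># A" "X \<notin># A - {#C, C'#}"
  have "\<not> count {#C, C'#} X < count A X" using h(2) in_diff_count by metis
  moreover have "0 < count A X" using h(1) by simp
  ultimately have "0 < count {#C, C'#} X" by linarith
  then have "X \<in># {#C, C'#}" by (simp only: count_greater_zero_iff)
  then show ?thesis by simp
qed

lemma merge_stepE:
  assumes "merge_step \<phi> A B"
  obtains C C' where "{#C, C'#} \<subseteq># A" "C \<inter> C' \<noteq> {}"
    "B = A - {#C, C'#} + {#\<phi> (C \<union> C')#}"
  using assms unfolding merge_step_def by (elim exE conjE) (rule that; assumption)

lemma disj_eq:
  assumes "pairwise_disjoint_coll D" "X \<in># D" "Y \<in># D" "X \<inter> Y \<noteq> {}"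
  shows "X = Y"
proof (rule ccontr)
  assume "X \<noteq> Y"
  then have "{#X, Y#} \<subseteq># D" by (rule two_sub[OF _ assms(2,3)])
  then show False using assms(1,4) unfolding pairwise_disjoint_coll_def by blast
qed

lemma mem_new: "X \<in># A - M + {#Z#} \<Longrightarrow> X \<in># A \<or> X = Z"
proof -
  assume "X \<in># A - M + {#Z#}"
  then have "X \<in># A - M \<or> X = Z" by auto
  then show ?thesis by (auto dest: in_diffD)
qed

definition good :: "('a set \<Rightarrow> 'a set) \<Rightarrow> 'a set multiset \<Rightarrow> bool" where
  "good \<phi> A \<longleftrightarrow> (\<forall>X\<in>#A. X \<noteq> {} \<and> (\<exists>Y. Y \<noteq> {} \<and> X = \<phi> Y))"

lemma step_good:
  assumes "merge_step \<phi> A B" "good \<phi> A"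
    and ne: "\<And>A. A \<noteq> {} \<Longrightarrow> \<phi> A \<noteq> {}"
  shows "good \<phi> B"
proof -
  obtain C C' where h: "{#C, C'#} \<subseteq># A" "C \<inter> C' \<noteq> {}"
    "B = A - {#C, C'#} + {#\<phi> (C \<union> C')#}" using assms(1) by (rule merge_stepE)
  show ?thesis unfolding good_def
  proof
    fix X assume "X \<in># B"
    then have "X \<in># A \<or> X = \<phi> (C \<union> C')" unfolding h(3) by (rule mem_new)
    then show "X \<noteq> {} \<and> (\<exists>Y. Y \<noteq> {} \<and> X = \<phi> Y)"
    proof
      assume "X \<in># A"
      then show ?thesis using assms(2) unfolding good_def by blast
    next
      assume X: "X = \<phi> (C \<union> C')"
      have cne: "C \<union> C' \<noteq> {}" using h(2) by blast
      show ?thesis unfolding X by (intro conjI exI[of _ "C \<union> C'"] ne[OF cne] cne refl)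
    qed
  qed
qed

lemma steps_good:
  assumes "(merge_step \<phi>)\<^sup>*\<^sup>* A B" "good \<phi> A"
    and ne: "\<And>A. A \<noteq> {} \<Longrightarrow> \<phi> A \<noteq> {}"
  shows "good \<phi> B"
  using assms(1,2)
proof induction
  case base then show ?case .
next
  case (step y z)
  then have "good \<phi> y" by simp
  then show ?case by (rule step_good[OF step(2) _ ne])
qed

lemma step_cover:
  assumes "merge_step \<phi> A B" "X \<in># A"
    and p1: "\<And>A. A \<noteq> {} \<Longrightarrow> A \<subseteq> \<phi> A"
  shows "\<exists>Y\<in>#B. X \<subseteq> Y"
proof -
  obtain C C' where h: "{#C, C'#} \<subseteq># A" "C \<inter> C' \<noteq> {}"
    "B = A - {#C, C'#} + {#\<phi> (C \<union> C')#}" using assms(1) by (rule merge_stepE)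
  have "C \<union> C' \<noteq> {}" using h(2) by blast
  then have sub: "C \<union> C' \<subseteq> \<phi> (C \<union> C')" by (rule p1)
  show ?thesis
  proof (cases "X \<in># A - {#C, C'#}")
    case True
    then have xb: "X \<in># B" using h(3) by simp
    show ?thesis by (rule bexI[of "\<lambda>Y. X \<subseteq> Y", OF subset_refl xb])
  next
    case False
    have "X = C \<or> X = C'" by (rule sub_rest[OF assms(2) False])
    then have xs: "X \<subseteq> \<phi> (C \<union> C')" using sub by blast
    have mb: "\<phi> (C \<union> C') \<in># B" using h(3) by simp
    show ?thesis by (rule bexI[of "\<lambda>Y. X \<subseteq> Y", OF xs mb])
  qed
qed

lemma steps_cover:
  assumes "(merge_step \<phi>)\<^sup>*\<^sup>* A B" "X \<in># A"
    and p1: "\<And>A. A \<noteq> {} \<Longrightarrow> A \<subseteq> \<phi> A"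
  shows "\<exists>Y\<in>#B. X \<subseteq> Y"
  using assms(1,2)
proof (induction arbitrary: X)
  case base then show ?case by auto
next
  case (step B C)
  then obtain Y where y: "Y \<in># B" "X \<subseteq> Y" by blast
  obtain Y' where y': "Y' \<in># C" "Y \<subseteq> Y'" using step_cover[OF step(2) y(1) p1] by blast
  have "X \<subseteq> Y'" using y(2) y'(2) by (rule subset_trans)
  then show ?case by (rule bexI[of "\<lambda>Y. X \<subseteq> Y", OF _ y'(1)])
qed

lemma steps_into:
  assumes "(merge_step \<phi>)\<^sup>*\<^sup>* A B" "good \<phi> A"
    and "pairwise_disjoint_coll D" "good \<phi> D"
    and "\<forall>X\<in>#A. \<exists>Y\<in>#D. X \<subseteq> Y"
    and ne: "\<And>A. A \<noteq> {} \<Longrightarrow> \<phi> A \<noteq> {}"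
    and p1: "\<And>A. A \<noteq> {} \<Longrightarrow> A \<subseteq> \<phi> A"
    and p2: "\<And>A B. A \<noteq> {} \<Longrightarrow> B \<noteq> {} \<Longrightarrow> A \<subseteq> \<phi> B \<Longrightarrow> \<phi> A \<subseteq> \<phi> B"
  shows "\<forall>X\<in>#B. \<exists>Y\<in>#D. X \<subseteq> Y"
  using assms(1,2,5)
proof induction
  case base then show ?case by auto
next
  case (step B B')
  have gB: "good \<phi> B" using steps_good[OF step(1) step(4) ne] .
  obtain C C' where h: "{#C, C'#} \<subseteq># B" "C \<inter> C' \<noteq> {}"
    "B' = B - {#C, C'#} + {#\<phi> (C \<union> C')#}" using step(2) by (rule merge_stepE)
  have IH: "\<forall>X\<in>#B. \<exists>Y\<in>#D. X \<subseteq> Y" using step by blast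
  have cB1: "C \<in># B" by (rule sub_mem1[OF h(1)])
  have cB2: "C' \<in># B" by (rule sub_mem2[OF h(1)])
  note cB = cB1 cB2
  obtain D1 where d1: "D1 \<in># D" "C \<subseteq> D1" using IH cB by blast
  obtain D2 where d2: "D2 \<in># D" "C' \<subseteq> D2" using IH cB by blast
  have "D1 \<inter> D2 \<noteq> {}" using d1 d2 h(2) by blast
  then have "D1 = D2" using disj_eq[OF assms(3) d1(1) d2(1)] by blast
  obtain W where w: "W \<noteq> {}" "D1 = \<phi> W" using assms(4) d1(1) unfolding good_def by blast
  have cc: "C \<union> C' \<subseteq> \<phi> W" using w d1 d2 \<open>D1 = D2\<close> by blast
  have cne: "C \<union> C' \<noteq> {}" using h(2) by blast
  have "\<phi> (C \<union> C') \<subseteq> \<phi> W" by (rule p2[OF cne w(1) cc])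
  then have new: "\<phi> (C \<union> C') \<subseteq> D1" using w by simp
  show ?case
  proof
    fix X assume "X \<in># B'"
    then have "X \<in># B \<or> X = \<phi> (C \<union> C')" unfolding h(3) by (rule mem_new)
    then show "\<exists>Y\<in>#D. X \<subseteq> Y"
    proof
      assume "X \<in># B" then show ?thesis using IH by blast
    next
      assume "X = \<phi> (C \<union> C')"
      then have "X \<subseteq> D1" using new by simp
      then show ?thesis by (rule bexI[of "\<lambda>Y. X \<subseteq> Y", OF _ d1(1)])
    qed
  qed
qed

theorem theorem1:
  fixes \<phi> :: "point set \<Rightarrow> point set"
    and Ts :: "(point set \<times> point set set) list"
  assumes phi_ne: "\<And>A. A \<noteq> {} \<Longrightarrow> \<phi> A \<noteq> {}"
    and prop1: "\<And>A. A \<noteq> {} \<Longrightarrow> A \<subseteq> \<phi> A"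
    and prop2: "\<And>A B. A \<noteq> {} \<Longrightarrow> B \<noteq> {} \<Longrightarrow> A \<subseteq> \<phi> B \<Longrightarrow> \<phi> A \<subseteq> \<phi> B"
    and trees: "\<And>T. T \<in> set Ts \<Longrightarrow> plane_tree (fst T) (snd T)"
    and distinct: "distinct (map (\<lambda>T. geom_tree (fst T) (snd T)) Ts)"
    and noncross: "\<And>i j. i < length Ts \<Longrightarrow> j < length Ts \<Longrightarrow> i \<noteq> j \<Longrightarrow>
                     non_crossing (Ts ! i) (Ts ! j)"
    and run1: "merging_output \<phi> (mset (map (\<lambda>T. \<phi> (geom_tree (fst T) (snd T))) Ts)) \<C>1"
    and run2: "merging_output \<phi> (mset (map (\<lambda>T. \<phi> (geom_tree (fst T) (snd T))) Ts)) \<C>2"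
  shows "set_mset \<C>1 = set_mset \<C>2"
proof -
  define A0 where "A0 = mset (map (\<lambda>T. \<phi> (geom_tree (fst T) (snd T))) Ts)"
  have gt: "geom_tree (fst T) (snd T) \<noteq> {}" if "T \<in> set Ts" for T
  proof -
    have "fst T \<noteq> {}" using trees[OF that] unfolding plane_tree_def by (rule conjunct1[OF conjunct2])
    then show ?thesis unfolding geom_tree_def by blast
  qed
  have g0: "good \<phi> A0" unfolding good_def A0_def
  proof
    fix X assume "X \<in># mset (map (\<lambda>T. \<phi> (geom_tree (fst T) (snd T))) Ts)"
    then obtain T where T: "T \<in> set Ts" "X = \<phi> (geom_tree (fst T) (snd T))" by auto
    show "X \<noteq> {} \<and> (\<exists>Y. Y \<noteq> {} \<and> X = \<phi> Y)"
      using T gt[OF T(1)] phi_ne[OF gt[OF T(1)]] by blast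
  qed
  have r1: "(merge_step \<phi>)\<^sup>*\<^sup>* A0 \<C>1" "pairwise_disjoint_coll \<C>1"
    using run1 unfolding merging_output_def A0_def by auto
  have r2: "(merge_step \<phi>)\<^sup>*\<^sup>* A0 \<C>2" "pairwise_disjoint_coll \<C>2"
    using run2 unfolding merging_output_def A0_def by auto
  have g1: "good \<phi> \<C>1" using steps_good[OF r1(1) g0 phi_ne] .
  have g2: "good \<phi> \<C>2" using steps_good[OF r2(1) g0 phi_ne] .
  have "\<forall>X\<in>#A0. \<exists>Y\<in>#\<C>2. X \<subseteq> Y"
  proof
    fix X assume "X \<in># A0" then show "\<exists>Y\<in>#\<C>2. X \<subseteq> Y" by (rule steps_cover[OF r2(1) _ prop1])
  qed
  then have c12: "\<forall>X\<in>#\<C>1. \<exists>Y\<in>#\<C>2. X \<subseteq> Y"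
    by (rule steps_into[OF r1(1) g0 r2(2) g2 _ phi_ne prop1 prop2])
  have "\<forall>X\<in>#A0. \<exists>Y\<in>#\<C>1. X \<subseteq> Y"
  proof
    fix X assume "X \<in># A0" then show "\<exists>Y\<in>#\<C>1. X \<subseteq> Y" by (rule steps_cover[OF r1(1) _ prop1])
  qed
  then have c21: "\<forall>X\<in>#\<C>2. \<exists>Y\<in>#\<C>1. X \<subseteq> Y"
    by (rule steps_into[OF r2(1) g0 r1(2) g1 _ phi_ne prop1 prop2])
  have key: "\<And>X. X \<in># \<C>1 \<Longrightarrow> X \<in># \<C>2"
  proof -
    fix X assume x: "X \<in># \<C>1"
    then obtain Y where y: "Y \<in># \<C>2" "X \<subseteq> Y" using c12 by blast
    then obtain X' where x': "X' \<in># \<C>1" "Y \<subseteq> X'" using c21 by blast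
    have "X \<noteq> {}" using g1 x unfolding good_def by blast
    then have "X \<inter> X' \<noteq> {}" using y(2) x'(2) by blast
    then have "X = X'" by (rule disj_eq[OF r1(2) x x'(1)])
    then have "Y \<subseteq> X" using x'(2) by simp
    then have "X = Y" by (rule subset_antisym[OF y(2)])
    then show "X \<in># \<C>2" using y(1) by simp
  qed
  have key2: "\<And>X. X \<in># \<C>2 \<Longrightarrow> X \<in># \<C>1"
  proof -
    fix X assume x: "X \<in># \<C>2"
    then obtain Y where y: "Y \<in># \<C>1" "X \<subseteq> Y" using c21 by blast
    then obtain X' where x': "X' \<in># \<C>2" "Y \<subseteq> X'" using c12 by blast
    have "X \<noteq> {}" using g2 x unfolding good_def by blast
    then have "X \<inter> X' \<noteq> {}" using y(2) x'(2) by blast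
    then have "X = X'" by (rule disj_eq[OF r2(2) x x'(1)])
    then have "Y \<subseteq> X" using x'(2) by simp
    then have "X = Y" by (rule subset_antisym[OF y(2)])
    then show "X \<in># \<C>1" using y(1) by simp
  qed
  show ?thesis using key key2 by blast
qed

end
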